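(* Let $n\ge1$. For integers $1\le k\le n$ let $$S_k=\binom{n}{k}\frac{(2n-2)!}{2^{n-1}(k-1)!},$$ and let $k_0=\sqrt{n+1}-1$. Then: - $S_k\le S_{k+1}$ for every integer $k$ with $1\le k\le k_0$; - $S_k>S_{k+1}$ for every integer $k$ with $k_0<k<2k_0$; - $S_k>2S_{k+1}$ for every integer $k$ with $2k_0\le k\le n$. Here $S_{n+1}:=0$, consistent with $\binom{n}{n+1}=0$. *)

theory Defs
  imports Complex_Main
begin

text \<open>S_k = binom(n,k) (2n-2)! / (2^(n-1) (k-1)!), for k \<ge> 1. For k = n+1 the
binomial coefficient vanishes, so S n (n+1) = 0 as stipulated.\<close>
definition S :: "nat \<Rightarrow> nat \<Rightarrow> real" where
  "S n k = real (n choose k) * fact (2*n - 2) / (2 ^ (n - 1) * fact (k - 1))"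

end

theory Submission
  imports Defs
begin

lemma choose_step:
  assumes "1 \<le> n"
  shows "Suc k * (n choose Suc k) = (n - k) * (n choose k)"
proof -
  obtain m where m: "n = Suc m" using assms by (cases n) auto
  show ?thesis using Suc_times_binomial[of k m] binomial_absorb_comp[of n k] m by simp
qed

lemma S_pos:
  assumes "1 \<le> k" "k \<le> n"
  shows "S n k > 0"
  using assms unfolding S_def by (simp add: zero_less_binomial)

lemma S_last: "S n (n+1) = 0"
  unfolding S_def by simp

lemma S_ratio:
  assumes "1 \<le> k" "1 \<le> n"
  shows "S n (k+1) * (real k * (real k + 1)) = S n k * (real n - real k)"
proof (cases "k \<le> n")
  case True
  define A :: real where "A = fact (2*n - 2) / 2 ^ (n - 1)"
  have SA: "S n j = real (n choose j) * A / fact (j - 1)" for j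
    unfolding S_def A_def by simp
  have c: "real (Suc k) * real (n choose Suc k) = (real n - real k) * real (n choose k)"
    using arg_cong[OF choose_step[OF assms(2), of k], of real] True
    by (simp add: of_nat_diff algebra_simps)
  obtain j where j: "k = Suc j" using assms by (cases k) auto
  have f: "(fact k :: real) = real k * fact (k - 1)" using j by simp
  have fp: "(fact (k-1) :: real) > 0" by simp
  have e1: "S n (k+1) = real (n choose Suc k) * A / (real k * fact (k-1))"
    unfolding SA using f by simp
  have kne: "real k \<noteq> 0" using assms by simp
  have "S n (k+1) * (real k * (real k + 1)) = real (Suc k) * real (n choose Suc k) * A / fact (k - 1)"
    unfolding e1 using kne fp by (simp add: field_simps)
  also have "\<dots> = (real n - real k) * real (n choose k) * A / fact (k - 1)"
    using arg_cong[OF c, of "\<lambda>x. x * A / fact (k-1)"] by simp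
  also have "\<dots> = S n k * (real n - real k)" unfolding SA by simp
  finally show ?thesis .
next
  case False
  then show ?thesis unfolding S_def by (simp add: binomial_eq_0)
qed

theorem propositionA1:
  fixes n :: nat
  assumes "n \<ge> 1"
  defines "k0 \<equiv> sqrt (real n + 1) - 1"
  shows "(\<forall>k::nat. 1 \<le> k \<and> real k \<le> k0 \<longrightarrow> S n k \<le> S n (k + 1))
       \<and> (\<forall>k::nat. 1 \<le> k \<and> k \<le> n \<and> k0 < real k \<and> real k < 2 * k0 \<longrightarrow> S n k > S n (k + 1))
       \<and> (\<forall>k::nat. 1 \<le> k \<and> 2 * k0 \<le> real k \<and> k \<le> n \<longrightarrow> S n k > 2 * S n (k + 1))"
proof (intro conjI allI impI)
  have sq: "sqrt (real n + 1) ^ 2 = real n + 1" by simp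
  have sq0: "sqrt (real n + 1) \<ge> 0" by simp
  fix k :: nat
  {
    assume h: "1 \<le> k \<and> real k \<le> k0"
    have "real k + 1 \<le> sqrt (real n + 1)" using h k0_def by simp
    hence "(real k + 1)^2 \<le> sqrt (real n + 1) ^ 2" by (intro power_mono) auto
    hence q: "(real k + 1)^2 \<le> real n + 1" using sq by simp
    have kk: "real k * real k \<ge> 0" by simp
    have q': "real k * real k + 2 * real k \<le> real n" using q by (simp add: power2_eq_square algebra_simps)
    have "real k \<le> real n" using q' kk by linarith
    hence kn: "k \<le> n" by simp
    have r: "S n (k+1) * (real k * (real k + 1)) = S n k * (real n - real k)"
      using S_ratio h assms(1) by blast
    have pos: "S n k > 0" using S_pos h kn by blast
    have le: "real k * (real k + 1) \<le> real n - real k" using q by (simp add: power2_eq_square algebra_simps)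
    have kp: "real k * (real k + 1) > 0" using h by simp
    have "S n k * (real k * (real k + 1)) \<le> S n k * (real n - real k)"
      using pos le by (intro mult_left_mono) auto
    hence "S n k * (real k * (real k + 1)) \<le> S n (k+1) * (real k * (real k + 1))" using r by simp
    thus "S n k \<le> S n (k + 1)" using kp by (simp add: mult_le_cancel_right)
  }
  {
    assume h: "1 \<le> k \<and> k \<le> n \<and> k0 < real k \<and> real k < 2 * k0"
    have pos: "S n k > 0" using S_pos h by blast
    show "S n k > S n (k + 1)"
    proof (cases "k = n")
      case True then show ?thesis using pos S_last by simp
    next
      case False
      have "sqrt (real n + 1) < real k + 1" using h k0_def by simp
      hence "sqrt (real n + 1) ^ 2 < (real k + 1)^2" using sq0 by (intro power_strict_mono) auto
      hence q: "real n + 1 < (real k + 1)^2" using sq by simp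
      have r: "S n (k+1) * (real k * (real k + 1)) = S n k * (real n - real k)"
        using S_ratio h assms(1) by blast
      have lt: "real n - real k < real k * (real k + 1)" using q by (simp add: power2_eq_square algebra_simps)
      have kp: "real k * (real k + 1) > 0" using h by simp
      have "S n k * (real n - real k) < S n k * (real k * (real k + 1))"
        using pos lt by (intro mult_strict_left_mono) auto
      hence "S n (k+1) * (real k * (real k + 1)) < S n k * (real k * (real k + 1))" using r by simp
      thus ?thesis using kp by (simp add: mult_less_cancel_right)
    qed
  }
  {
    assume h: "1 \<le> k \<and> 2 * k0 \<le> real k \<and> k \<le> n"
    have pos: "S n k > 0" using S_pos h by blast
    show "S n k > 2 * S n (k + 1)"
    proof (cases "k = n")
      case True then show ?thesis using pos S_last by simp
    next
      case False
      have "2 * sqrt (real n + 1) \<le> real k + 2" using h k0_def by simp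
      hence "(2 * sqrt (real n + 1)) ^ 2 \<le> (real k + 2)^2" using sq0 by (intro power_mono) auto
      hence q: "4 * (real n + 1) \<le> (real k + 2)^2" using sq by (simp add: power_mult_distrib)
      have r: "S n (k+1) * (real k * (real k + 1)) = S n k * (real n - real k)"
        using S_ratio h assms(1) by blast
      have k1: "real k \<ge> 1" using h by simp
      have kk: "real k * real k \<ge> 0" by simp
      have q2: "4 * real n \<le> real k * real k + 4 * real k" using q by (simp add: power2_eq_square algebra_simps)
      have aux: "2*(m-x) < y + x" if "4*m \<le> y + 4*x" "1 \<le> x" "0 \<le> y" for x y m :: real
        using that by (smt (verit))
      have lt: "2 * (real n - real k) < real k * real k + real k" using aux[OF q2 k1 kk] .
      hence lt: "2 * (real n - real k) < real k * (real k + 1)"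
        by (simp add: algebra_simps)
      have kp: "real k * (real k + 1) > 0" using h by simp
      have "S n k * (2 * (real n - real k)) < S n k * (real k * (real k + 1))"
        using pos lt by (intro mult_strict_left_mono) auto
      hence "(2 * S n (k+1)) * (real k * (real k + 1)) < S n k * (real k * (real k + 1))" using r
        by (simp add: algebra_simps)
      thus ?thesis using kp by (simp add: mult_less_cancel_right)
    qed
  }
qed

end
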